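(* Let $m_1,m_2,m_3,m_4>0$, $M=\sum m_i$, and for $\mathbf{r}=(r_{12},r_{13},r_{14},r_{23},r_{24},r_{34})$ let $U(\mathbf{r})=\sum_{i<j}\frac{m_im_j}{r_{ij}}$, $I(\mathbf{r})=\frac{1}{2M}\sum_{i<j}m_im_jr_{ij}^2$, $P(\mathbf{r})=r_{12}r_{34}+r_{14}r_{23}-r_{13}r_{24}$, and $\mathcal{M}^+=\{\mathbf{r}\in[0,\infty)^6: I(\mathbf{r})=1,\ P(\mathbf{r})=0\}$. Then the function $U|_{\mathcal{M}^+}$ has a unique critical point on $\mathcal{M}^+$.
   Context: $U=+\infty$ where some $r_{ij}=0$ (the boundary of $\mathcal{M}^+$); the set of points of $\mathcal{M}^+$ with all $r_{ij}>0$ is a smooth 4-dimensional manifold, and a critical point of $U|_{\mathcal{M}^+}$ is a point there at which the gradient of $U$ is a linear combination of the gradients of $I$ and $P$. *)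

theory Defs
  imports "HOL-Analysis.Analysis" "HOL-Library.Numeral_Type"
begin

text \<open>Configurations of mutual distances: r :: real^6 with
  r$1 = r12, r$2 = r13, r$3 = r14, r$4 = r23, r$5 = r24, r$6 = r34.\<close>

definition Upot :: "real \<Rightarrow> real \<Rightarrow> real \<Rightarrow> real \<Rightarrow> real^6 \<Rightarrow> real" where
  "Upot m1 m2 m3 m4 r =
     m1*m2 / r$1 + m1*m3 / r$2 + m1*m4 / r$3 + m2*m3 / r$4 + m2*m4 / r$5 + m3*m4 / r$6"

definition Imom :: "real \<Rightarrow> real \<Rightarrow> real \<Rightarrow> real \<Rightarrow> real^6 \<Rightarrow> real" where
  "Imom m1 m2 m3 m4 r = (1 / (2 * (m1 + m2 + m3 + m4))) *
     (m1*m2*(r$1)^2 + m1*m3*(r$2)^2 + m1*m4*(r$3)^2 + m2*m3*(r$4)^2 + m2*m4*(r$5)^2 + m3*m4*(r$6)^2)"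

definition Pcay :: "real^6 \<Rightarrow> real" where
  "Pcay r = r$1 * r$6 + r$3 * r$4 - r$2 * r$5"

definition Mplus :: "real \<Rightarrow> real \<Rightarrow> real \<Rightarrow> real \<Rightarrow> (real^6) set" where
  "Mplus m1 m2 m3 m4 = {r. (\<forall>i. 0 \<le> r$i) \<and> Imom m1 m2 m3 m4 r = 1 \<and> Pcay r = 0}"

definition crit_point :: "real \<Rightarrow> real \<Rightarrow> real \<Rightarrow> real \<Rightarrow> real^6 \<Rightarrow> bool" where
  "crit_point m1 m2 m3 m4 r \<longleftrightarrow>
     r \<in> Mplus m1 m2 m3 m4 \<and> (\<forall>i. 0 < r$i) \<and>
     (\<exists>DU DI DP a b.
        (Upot m1 m2 m3 m4 has_derivative DU) (at r) \<and>
        (Imom m1 m2 m3 m4 has_derivative DI) (at r) \<and>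
        (Pcay has_derivative DP) (at r) \<and>
        (\<forall>h. DU h = a * DI h + b * DP h))"

end

theory Submission
  imports Defs
begin

lemma hd_nth[derivative_intros]: "((\<lambda>x::real^'n. x$i) has_derivative (\<lambda>h. h$i)) F"
  by (rule bounded_linear_imp_has_derivative[OF bounded_linear_vec_nth])
lemma dU: assumes "\<forall>i. r$i \<noteq> 0"
  shows "(Upot m1 m2 m3 m4 has_derivative (\<lambda>h. - (m1*m2) * h$1 / (r$1)^2 - (m1*m3) * h$2 / (r$2)^2
     - (m1*m4) * h$3 / (r$3)^2 - (m2*m3) * h$4 / (r$4)^2 - (m2*m4) * h$5 / (r$5)^2 - (m3*m4) * h$6 / (r$6)^2)) (at r)"
  unfolding Upot_def[abs_def]
  apply (rule derivative_eq_intros refl | simp add: assms)+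
  apply (simp add: fun_eq_iff field_simps power2_eq_square)
  done
lemma dI: 
  shows "(Imom m1 m2 m3 m4 has_derivative (\<lambda>h. (1 / (2 * (m1 + m2 + m3 + m4))) * (m1*m2*(2*r$1*h$1) + m1*m3*(2*r$2*h$2) + m1*m4*(2*r$3*h$3) + m2*m3*(2*r$4*h$4)
   + m2*m4*(2*r$5*h$5) + m3*m4*(2*r$6*h$6)))) (at r)"
  unfolding Imom_def[abs_def]
  apply (rule derivative_eq_intros refl | simp)+
  apply (simp add: fun_eq_iff field_simps power2_eq_square)
  done
lemma dP: 
  shows "(Pcay has_derivative (\<lambda>h. h$1 * r$6 + r$1 * h$6 + h$3 * r$4 + r$3*h$4 - h$2*r$5 - r$2*h$5)) (at r)"
  unfolding Pcay_def[abs_def]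
  apply (rule derivative_eq_intros refl | simp)+
  apply (simp add: fun_eq_iff field_simps power2_eq_square)
  done


definition eqs :: "real \<Rightarrow> real \<Rightarrow> real \<Rightarrow> real \<Rightarrow> real \<Rightarrow> real \<Rightarrow> real^6 \<Rightarrow> bool" where
 "eqs m1 m2 m3 m4 a b r \<longleftrightarrow>
   -(m1*m2)/(r$1)^2 = a*(m1*m2*r$1)/(m1+m2+m3+m4) + b*r$6 \<and>
   -(m1*m3)/(r$2)^2 = a*(m1*m3*r$2)/(m1+m2+m3+m4) - b*r$5 \<and>
   -(m1*m4)/(r$3)^2 = a*(m1*m4*r$3)/(m1+m2+m3+m4) + b*r$4 \<and>
   -(m2*m3)/(r$4)^2 = a*(m2*m3*r$4)/(m1+m2+m3+m4) + b*r$3 \<and>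
   -(m2*m4)/(r$5)^2 = a*(m2*m4*r$5)/(m1+m2+m3+m4) - b*r$2 \<and>
   -(m3*m4)/(r$6)^2 = a*(m3*m4*r$6)/(m1+m2+m3+m4) + b*r$1"

lemma exhaust_6:
  fixes x :: 6
  shows "x = 1 \<or> x = 2 \<or> x = 3 \<or> x = 4 \<or> x = 5 \<or> x = 6"
proof (induct x)
  case (of_int z)
  then have "z = 0 \<or> z = 1 \<or> z = 2 \<or> z = 3 \<or> z = 4 \<or> z = 5" by fastforce
  then show ?case by auto
qed

lemma forall_6: "(\<forall>i::6. P i) \<longleftrightarrow> P 1 \<and> P 2 \<and> P 3 \<and> P 4 \<and> P 5 \<and> P 6"
  by (metis exhaust_6)

lemma half_aux: "a * (w * (2 * x)) / (2 * p + 2 * q + 2 * s + 2 * t) = a * (w * x) / (p+q+s+t)" for a w x p q s t :: real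
proof -
  have "2 * p + 2 * q + 2 * s + 2 * t = 2 * (p+q+s+t)" by simp
  then show ?thesis by (cases "p+q+s+t = 0") (simp_all add: field_simps)
qed

lemma lin_aux: "M \<noteq> 0 \<Longrightarrow> (a*(w1*r1)/M + b*r6) * h1 + (a*(w2*r2)/M - b*r5) * h2
      + (a*(w3*r3)/M + b*r4) * h3 + (a*(w4*r4)/M + b*r3) * h4
      + (a*(w5*r5)/M - b*r2) * h5 + (a*(w6*r6)/M + b*r1) * h6
   = a * ((1 / (2 * M)) * (w1*(2*r1*h1) + w2*(2*r2*h2) + w3*(2*r3*h3) + w4*(2*r4*h4)
   + w5*(2*r5*h5) + w6*(2*r6*h6))) + b * (h1 * r6 + r1 * h6 + h3 * r4 + r3*h4 - h2*r5 - r2*h5)"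
  for M a b w1 w2 w3 w4 w5 w6 r1 r2 r3 r4 r5 r6 h1 h2 h3 h4 h5 h6 :: real
  by (simp add: field_simps)

lemma crit_iff:
  assumes M: "m1+m2+m3+m4 > 0"
  shows "crit_point m1 m2 m3 m4 r \<longleftrightarrow>
     r \<in> Mplus m1 m2 m3 m4 \<and> (\<forall>i. 0 < r$i) \<and> (\<exists>a b. eqs m1 m2 m3 m4 a b r)"
proof
  assume c: "crit_point m1 m2 m3 m4 r"
  then have pos: "\<forall>i. 0 < r$i" and Mp: "r \<in> Mplus m1 m2 m3 m4" unfolding crit_point_def by auto
  then have nz: "\<forall>i. r$i \<noteq> 0" by (metis less_irrefl)
  from c obtain DU DI DP a b where
    hU: "(Upot m1 m2 m3 m4 has_derivative DU) (at r)" and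
    hI: "(Imom m1 m2 m3 m4 has_derivative DI) (at r)" and
    hP: "(Pcay has_derivative DP) (at r)" and lin: "\<forall>h. DU h = a * DI h + b * DP h"
    unfolding crit_point_def by blast
  note U = has_derivative_unique[OF hU dU[OF nz]]
  note I = has_derivative_unique[OF hI dI]
  note P = has_derivative_unique[OF hP dP]
  have L: "\<And>h. DU h = a * DI h + b * DP h" using lin by blast
  have "eqs m1 m2 m3 m4 a b r"
    unfolding eqs_def
    using L[of "axis 1 1"] L[of "axis 2 1"] L[of "axis 3 1"] L[of "axis 4 1"] L[of "axis 5 1"] L[of "axis 6 1"]
    unfolding U I P using M by (simp add: axis_def half_aux)
  then show "r \<in> Mplus m1 m2 m3 m4 \<and> (\<forall>i. 0 < r$i) \<and> (\<exists>a b. eqs m1 m2 m3 m4 a b r)"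
    using pos Mp by blast
next
  assume "r \<in> Mplus m1 m2 m3 m4 \<and> (\<forall>i. 0 < r$i) \<and> (\<exists>a b. eqs m1 m2 m3 m4 a b r)"
  then obtain a b where Mp: "r \<in> Mplus m1 m2 m3 m4" and pos: "\<forall>i. 0 < r$i" and e: "eqs m1 m2 m3 m4 a b r"
    by blast
  then have nz: "\<forall>i. r$i \<noteq> 0" by (metis less_irrefl)
  have lin: "\<forall>h::real^6. (\<lambda>h. - (m1*m2) * h$1 / (r$1)^2 - (m1*m3) * h$2 / (r$2)^2
     - (m1*m4) * h$3 / (r$3)^2 - (m2*m3) * h$4 / (r$4)^2 - (m2*m4) * h$5 / (r$5)^2 - (m3*m4) * h$6 / (r$6)^2) h
     = a * (\<lambda>h. (1 / (2 * (m1 + m2 + m3 + m4))) * (m1*m2*(2*r$1*h$1) + m1*m3*(2*r$2*h$2) + m1*m4*(2*r$3*h$3) + m2*m3*(2*r$4*h$4)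
   + m2*m4*(2*r$5*h$5) + m3*m4*(2*r$6*h$6))) h + b * (\<lambda>h. h$1 * r$6 + r$1 * h$6 + h$3 * r$4 + r$3*h$4 - h$2*r$5 - r$2*h$5) h"
  proof
    fix h :: "real^6"
    have "- (m1*m2) * h$1 / (r$1)^2 - (m1*m3) * h$2 / (r$2)^2
     - (m1*m4) * h$3 / (r$3)^2 - (m2*m3) * h$4 / (r$4)^2 - (m2*m4) * h$5 / (r$5)^2 - (m3*m4) * h$6 / (r$6)^2
     = (-(m1*m2)/(r$1)^2) * h$1 + (-(m1*m3)/(r$2)^2) * h$2 + (-(m1*m4)/(r$3)^2) * h$3
      + (-(m2*m3)/(r$4)^2) * h$4 + (-(m2*m4)/(r$5)^2) * h$5 + (-(m3*m4)/(r$6)^2) * h$6"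
      by (simp add: field_simps)
    also have "\<dots> = (a*(m1*m2*r$1)/(m1+m2+m3+m4) + b*r$6) * h$1 + (a*(m1*m3*r$2)/(m1+m2+m3+m4) - b*r$5) * h$2
      + (a*(m1*m4*r$3)/(m1+m2+m3+m4) + b*r$4) * h$3 + (a*(m2*m3*r$4)/(m1+m2+m3+m4) + b*r$3) * h$4
      + (a*(m2*m4*r$5)/(m1+m2+m3+m4) - b*r$2) * h$5 + (a*(m3*m4*r$6)/(m1+m2+m3+m4) + b*r$1) * h$6"
      using e unfolding eqs_def by simp
    also have "\<dots> = a * ((1 / (2 * (m1 + m2 + m3 + m4))) * (m1*m2*(2*r$1*h$1) + m1*m3*(2*r$2*h$2) + m1*m4*(2*r$3*h$3) + m2*m3*(2*r$4*h$4)
   + m2*m4*(2*r$5*h$5) + m3*m4*(2*r$6*h$6))) + b * (h$1 * r$6 + r$1 * h$6 + h$3 * r$4 + r$3*h$4 - h$2*r$5 - r$2*h$5)"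
      using M by (intro lin_aux) simp
    finally show "(\<lambda>h. - (m1*m2) * h$1 / (r$1)^2 - (m1*m3) * h$2 / (r$2)^2
     - (m1*m4) * h$3 / (r$3)^2 - (m2*m3) * h$4 / (r$4)^2 - (m2*m4) * h$5 / (r$5)^2 - (m3*m4) * h$6 / (r$6)^2) h
     = a * (\<lambda>h. (1 / (2 * (m1 + m2 + m3 + m4))) * (m1*m2*(2*r$1*h$1) + m1*m3*(2*r$2*h$2) + m1*m4*(2*r$3*h$3) + m2*m3*(2*r$4*h$4)
   + m2*m4*(2*r$5*h$5) + m3*m4*(2*r$6*h$6))) h + b * (\<lambda>h. h$1 * r$6 + r$1 * h$6 + h$3 * r$4 + r$3*h$4 - h$2*r$5 - r$2*h$5) h"
      by simp
  qed
  show "crit_point m1 m2 m3 m4 r"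
    unfolding crit_point_def
    using Mp pos dU[OF nz] dI dP lin by blast
qed


lemma exp_strict: assumes "(t::real) \<noteq> 0" shows "1 + t < exp t"
proof (cases "1 + t/2 < 0")
  case True then show ?thesis using exp_gt_zero[of t] by linarith
next
  case False
  have "(1 + t/2)^2 \<le> (exp (t/2))^2"
    using False exp_ge_add_one_self[of "t/2"] by (intro power_mono) auto
  also have "(exp (t/2))^2 = exp t" by (simp add: power2_eq_square flip: exp_add)
  finally have "(1 + t/2)^2 \<le> exp t" .
  have "t*t > 0" using assms by (metis linorder_neqE_linordered_idom mult_neg_neg mult_pos_pos)
  then have "1 + t < (1 + t/2)^2" by (simp add: power2_eq_square field_simps)
  moreover note \<open>(1 + t/2)^2 \<le> exp t\<close>
  ultimately show ?thesis by linarith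
qed

lemma jensen2:
  fixes al be p q w :: real
  assumes "al > 0" "be > 0" "al * exp p + be * exp q = (al + be) * exp w"
  shows "al * p + be * q \<le> (al + be) * w"
proof -
  define c where "c = (al * p + be * q) / (al + be)"
  have ep: "exp p \<ge> exp c * (1 + (p - c))"
    using exp_ge_add_one_self[of "p - c"] by (simp add: exp_diff field_simps)
  have eq: "exp q \<ge> exp c * (1 + (q - c))"
    using exp_ge_add_one_self[of "q - c"] by (simp add: exp_diff field_simps)
  have "al * exp p + be * exp q \<ge> al * (exp c * (1 + (p - c))) + be * (exp c * (1 + (q - c)))"
    using ep eq assms(1,2) by (intro add_mono mult_left_mono) auto
  also have "al * (exp c * (1 + (p - c))) + be * (exp c * (1 + (q - c))) = exp c * (al + be + (al*p + be*q) - (al+be)*c)"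
    by (simp add: algebra_simps)
  also have "(al+be)*c = al*p + be*q" using assms(1,2) unfolding c_def by simp
  finally have "(al + be) * exp w \<ge> (al + be) * exp c" using assms(3) by (simp add: mult.commute)
  then have "exp w \<ge> exp c" using assms(1,2) by (simp add: mult_le_cancel_left_pos)
  then have "w \<ge> c" by simp
  then have "(al+be) * w \<ge> (al+be) * c" using assms(1,2) by (intro mult_left_mono) auto
  then show ?thesis using assms(1,2) unfolding c_def by simp
qed

lemma core:
  fixes w1 w2 w3 w4 w5 w6 M a b r1 r2 r3 r4 r5 r6 t1 t2 t3 t4 t5 t6 :: real
  assumes w: "w1 > 0" "w2 > 0" "w3 > 0" "w4 > 0" "w5 > 0" "w6 > 0" and M: "M > 0"
    and r: "r1 > 0" "r2 > 0" "r3 > 0" "r4 > 0" "r5 > 0" "r6 > 0"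
    and ab: "a < 0" "b < 0"
    and E1: "-w1/r1^2 = a*(w1*r1)/M + b*r6"
    and E2: "-w2/r2^2 = a*(w2*r2)/M - b*r5"
    and E3: "-w3/r3^2 = a*(w3*r3)/M + b*r4"
    and E4: "-w4/r4^2 = a*(w4*r4)/M + b*r3"
    and E5: "-w5/r5^2 = a*(w5*r5)/M - b*r2"
    and E6: "-w6/r6^2 = a*(w6*r6)/M + b*r1"
    and Ir: "w1*(r1*exp t1)^2 + w2*(r2*exp t2)^2 + w3*(r3*exp t3)^2 + w4*(r4*exp t4)^2 + w5*(r5*exp t5)^2 + w6*(r6*exp t6)^2
           = w1*r1^2 + w2*r2^2 + w3*r3^2 + w4*r4^2 + w5*r5^2 + w6*r6^2"
    and Pr: "r1*r6 + r3*r4 - r2*r5 = 0"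
    and Ps: "(r1*exp t1)*(r6*exp t6) + (r3*exp t3)*(r4*exp t4) - (r2*exp t2)*(r5*exp t5) = 0"
    and nz: "t1 \<noteq> 0 \<or> t2 \<noteq> 0 \<or> t3 \<noteq> 0 \<or> t4 \<noteq> 0 \<or> t5 \<noteq> 0 \<or> t6 \<noteq> 0"
  shows "w1/(r1*exp t1) + w2/(r2*exp t2) + w3/(r3*exp t3) + w4/(r4*exp t4) + w5/(r5*exp t5) + w6/(r6*exp t6)
       > w1/r1 + w2/r2 + w3/r3 + w4/r4 + w5/r5 + w6/r6"
proof -
  have F: "w/rr = -(a/M)*(w*rr^2) - b*c" if "rr > 0" "-w/rr^2 = a*(w*rr)/M + b*d" "c = d*rr" for w rr c d
  proof -
    have "-w/rr = (-w/rr^2) * rr" using that(1) by (simp add: power2_eq_square)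
    also have "\<dots> = a*(w*rr^2)/M + b*c" unfolding that(2) that(3) by (simp add: algebra_simps power2_eq_square)
    finally show ?thesis by simp
  qed
  have F1: "w1/r1 = -(a/M)*(w1*r1^2) - b*(r1*r6)" using F[OF r(1) E1] by (simp add: mult.commute)
  have F2: "w2/r2 = -(a/M)*(w2*r2^2) - b*(-(r2*r5))" using F[OF r(2) E2[unfolded diff_conv_add_uminus minus_mult_right]] by (simp add: mult.commute)
  have F3: "w3/r3 = -(a/M)*(w3*r3^2) - b*(r3*r4)" using F[OF r(3) E3] by (simp add: mult.commute)
  have F4: "w4/r4 = -(a/M)*(w4*r4^2) - b*(r3*r4)" using F[OF r(4) E4] by (simp add: mult.commute)
  have F5: "w5/r5 = -(a/M)*(w5*r5^2) - b*(-(r2*r5))" using F[OF r(5) E5[unfolded diff_conv_add_uminus minus_mult_right]] by (simp add: mult.commute)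
  have F6: "w6/r6 = -(a/M)*(w6*r6^2) - b*(r1*r6)" using F[OF r(6) E6] by (simp add: mult.commute)
  define A where "A = w1*r1^2*t1 + w2*r2^2*t2 + w3*r3^2*t3 + w4*r4^2*t4 + w5*r5^2*t5 + w6*r6^2*t6"
  define B where "B = (r1*r6)*(t1+t6) + (r3*r4)*(t3+t4) - (r2*r5)*(t2+t5)"
  have S: "w1/r1*t1 + w2/r2*t2 + w3/r3*t3 + w4/r4*t4 + w5/r5*t5 + w6/r6*t6 = -(a/M)*A - b*B"
    unfolding F1 F2 F3 F4 F5 F6 A_def B_def by (simp add: algebra_simps)
  have sq: "w*(rr*exp t)^2 \<ge> w*rr^2 + 2*(w*rr^2*t)" if "w > 0" for w rr t :: real
  proof -
    have "(rr*exp t)^2 = rr^2 * exp (2*t)" by (simp add: power_mult_distrib power2_eq_square flip: exp_add)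
    moreover have "exp (2*t) \<ge> 1 + 2*t" by (rule exp_ge_add_one_self)
    ultimately have "(rr*exp t)^2 \<ge> rr^2 * (1 + 2*t)" by (simp add: mult_left_mono)
    then have "w*(rr*exp t)^2 \<ge> w*(rr^2 * (1 + 2*t))" using that by (simp add: mult_left_mono)
    then show ?thesis by (simp add: algebra_simps)
  qed
  have "A \<le> 0" using sq[OF w(1), of r1 t1] sq[OF w(2), of r2 t2] sq[OF w(3), of r3 t3]
      sq[OF w(4), of r4 t4] sq[OF w(5), of r5 t5] sq[OF w(6), of r6 t6] Ir unfolding A_def by linarith
  have "B \<le> 0"
  proof -
    have "(r1*r6) * exp (t1+t6) + (r3*r4) * exp (t3+t4) = ((r1*r6) + (r3*r4)) * exp (t2+t5)"
      using Ps Pr by (simp add: exp_add algebra_simps)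
    from jensen2[OF _ _ this] r have "(r1*r6)*(t1+t6) + (r3*r4)*(t3+t4) \<le> ((r1*r6) + (r3*r4))*(t2+t5)" by simp
    moreover have "r2*r5 = r1*r6 + r3*r4" using Pr by linarith
    ultimately show ?thesis unfolding B_def by simp
  qed
  have "a*A \<ge> 0" using \<open>A \<le> 0\<close> ab by (simp add: mult_nonpos_nonpos)
  then have "-(a/M)*A \<le> 0" using M by simp
  moreover have "b*B \<ge> 0" using \<open>B \<le> 0\<close> ab by (simp add: mult_nonpos_nonpos)
  ultimately have Sle: "w1/r1*t1 + w2/r2*t2 + w3/r3*t3 + w4/r4*t4 + w5/r5*t5 + w6/r6*t6 \<le> 0" using S by linarith
  have T: "w/(rr*exp t) - w/rr + w/rr*t \<ge> 0" "t \<noteq> 0 \<Longrightarrow> w/(rr*exp t) - w/rr + w/rr*t > 0" if "w > 0" "rr > 0" for w rr t :: real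
  proof -
    have e: "w/(rr*exp t) - w/rr + w/rr*t = (w/rr) * (exp (-t) - (1 + (-t)))"
      using that by (simp add: exp_minus field_simps)
    have "w/rr > 0" using that by simp
    then show "w/(rr*exp t) - w/rr + w/rr*t \<ge> 0" unfolding e using exp_ge_add_one_self[of "-t"] by (intro mult_nonneg_nonneg) auto
    assume "t \<noteq> 0"
    then have "exp (-t) - (1 + (-t)) > 0" using exp_strict[of "-t"] by simp
    then show "w/(rr*exp t) - w/rr + w/rr*t > 0" unfolding e using \<open>w/rr > 0\<close> by (intro mult_pos_pos) auto
  qed
  note T1 = T[OF w(1) r(1), of t1] and T2 = T[OF w(2) r(2), of t2] and T3 = T[OF w(3) r(3), of t3]
   and T4 = T[OF w(4) r(4), of t4] and T5 = T[OF w(5) r(5), of t5] and T6 = T[OF w(6) r(6), of t6]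
  from nz show ?thesis
    using T1 T2 T3 T4 T5 T6 Sle by linarith
qed


definition phi :: "real \<Rightarrow> real" where "phi x = 1/x + x^2/2"

definition Gf :: "real \<Rightarrow> real \<Rightarrow> real \<Rightarrow> real \<Rightarrow> real \<Rightarrow> real \<Rightarrow> real \<Rightarrow> real \<Rightarrow> real \<Rightarrow> real \<Rightarrow> real \<Rightarrow> real" where
  "Gf w1 w2 w3 w4 w5 w6 x1 x2 x3 x4 x6 =
     w1*phi x1 + w2*phi x2 + w3*phi x3 + w4*phi x4 + w5*phi ((x1*x6+x3*x4)/x2) + w6*phi x6"

lemma phi_pos: "x > 0 \<Longrightarrow> phi x > 0" unfolding phi_def by (simp add: add_pos_nonneg)

lemma phi_ge1: "x > 0 \<Longrightarrow> phi x \<ge> 1/x" unfolding phi_def by simp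
lemma phi_ge2: "x > 0 \<Longrightarrow> phi x \<ge> x^2/2" unfolding phi_def by simp

lemma wphi_big:
  fixes w wmin C x :: real
  assumes "w \<ge> wmin" "wmin > 0" "C > 0" "x > 0"
    and out: "x < min 1 (wmin/(C+1)) \<or> x > max 1 (2*(C+1)/wmin)"
  shows "w * phi x > C"
  using out
proof
  assume h: "x < min 1 (wmin/(C+1))"
  then have "x < wmin/(C+1)" by simp
  then have "x * (C+1) < wmin" using assms(3) by (simp add: field_simps)
  then have "C + 1 < wmin / x" using assms(4) by (simp add: field_simps)
  also have "wmin / x \<le> w / x" using assms by (simp add: divide_right_mono)
  also have "w / x \<le> w * phi x" using phi_ge1[OF assms(4)] assms
    by (metis (no_types, lifting) divide_inverse inverse_eq_divide less_le_trans mult_left_mono mult_1_right order_less_imp_le times_divide_eq_right)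
  finally show ?thesis by simp
next
  assume h: "x > max 1 (2*(C+1)/wmin)"
  then have x1: "x > 1" and "x > 2*(C+1)/wmin" by auto
  then have "x * wmin > 2*(C+1)" using assms(2) by (simp add: field_simps)
  then have a: "x * wmin / 2 > C + 1" by simp
  have "x^2/2 \<ge> x/2" using x1 by (simp add: power2_eq_square)
  then have "phi x \<ge> x/2" using phi_ge2[OF assms(4)] by linarith
  then have "w * phi x \<ge> wmin * (x/2)" using assms by (intro mult_mono) auto
  moreover have "wmin * (x/2) = x * wmin / 2" by simp
  ultimately show ?thesis using a by linarith
qed

lemma Gf_terms:
  assumes w: "w1 > 0" "w2 > 0" "w3 > 0" "w4 > 0" "w5 > 0" "w6 > 0"
    and y: "y1 > 0" "y2 > 0" "y3 > 0" "y4 > 0" "y6 > 0"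
  shows "Gf w1 w2 w3 w4 w5 w6 y1 y2 y3 y4 y6 \<ge> w1 * phi y1"
    "Gf w1 w2 w3 w4 w5 w6 y1 y2 y3 y4 y6 \<ge> w2 * phi y2"
    "Gf w1 w2 w3 w4 w5 w6 y1 y2 y3 y4 y6 \<ge> w3 * phi y3"
    "Gf w1 w2 w3 w4 w5 w6 y1 y2 y3 y4 y6 \<ge> w4 * phi y4"
    "Gf w1 w2 w3 w4 w5 w6 y1 y2 y3 y4 y6 \<ge> w6 * phi y6"
    "Gf w1 w2 w3 w4 w5 w6 y1 y2 y3 y4 y6 > 0"
proof -
  have y5: "(y1*y6+y3*y4)/y2 > 0" using y by (intro divide_pos_pos add_pos_pos mult_pos_pos) auto
  have p: "w1 * phi y1 > 0" "w2 * phi y2 > 0" "w3 * phi y3 > 0" "w4 * phi y4 > 0"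
    "w5 * phi ((y1*y6+y3*y4)/y2) > 0" "w6 * phi y6 > 0"
    using w y y5 phi_pos by auto
  show "Gf w1 w2 w3 w4 w5 w6 y1 y2 y3 y4 y6 \<ge> w1 * phi y1"
    "Gf w1 w2 w3 w4 w5 w6 y1 y2 y3 y4 y6 \<ge> w2 * phi y2"
    "Gf w1 w2 w3 w4 w5 w6 y1 y2 y3 y4 y6 \<ge> w3 * phi y3"
    "Gf w1 w2 w3 w4 w5 w6 y1 y2 y3 y4 y6 \<ge> w4 * phi y4"
    "Gf w1 w2 w3 w4 w5 w6 y1 y2 y3 y4 y6 \<ge> w6 * phi y6"
    "Gf w1 w2 w3 w4 w5 w6 y1 y2 y3 y4 y6 > 0"
    unfolding Gf_def using p by linarith+
qed

lemma sum_prod_nz: "0 < (a::real) \<Longrightarrow> 0 < b \<Longrightarrow> 0 < c \<Longrightarrow> 0 < e \<Longrightarrow> a*b + c*e \<noteq> 0"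
  by (metis add_pos_pos less_irrefl mult_pos_pos)

lemma ex_min:
  assumes w: "w1 > 0" "w2 > 0" "w3 > 0" "w4 > 0" "w5 > 0" "w6 > 0"
  shows "\<exists>z1 z2 z3 z4 z6. z1 > 0 \<and> z2 > 0 \<and> z3 > 0 \<and> z4 > 0 \<and> z6 > 0 \<and>
    (\<forall>y1 y2 y3 y4 y6. y1 > 0 \<longrightarrow> y2 > 0 \<longrightarrow> y3 > 0 \<longrightarrow> y4 > 0 \<longrightarrow> y6 > 0 \<longrightarrow>
       Gf w1 w2 w3 w4 w5 w6 z1 z2 z3 z4 z6 \<le> Gf w1 w2 w3 w4 w5 w6 y1 y2 y3 y4 y6)"
proof -
  define G where "G = Gf w1 w2 w3 w4 w5 w6"
  define C where "C = G 1 1 1 1 1"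
  have C: "C > 0" unfolding C_def G_def using Gf_terms[OF w] by simp
  define wmin where "wmin = min w1 (min w2 (min w3 (min w4 w6)))"
  have wmin: "wmin > 0" "wmin \<le> w1" "wmin \<le> w2" "wmin \<le> w3" "wmin \<le> w4" "wmin \<le> w6"
    unfolding wmin_def using w by auto
  define d where "d = min 1 (wmin/(C+1))"
  define R where "R = max 1 (2*(C+1)/wmin)"
  have d: "d > 0" "d \<le> 1" unfolding d_def using wmin C by auto
  have R: "R \<ge> 1" unfolding R_def by auto
  have big: "G y1 y2 y3 y4 y6 > C" if y: "y1 > 0" "y2 > 0" "y3 > 0" "y4 > 0" "y6 > 0"
    and out: "\<not> (d \<le> y1 \<and> y1 \<le> R \<and> d \<le> y2 \<and> y2 \<le> R \<and> d \<le> y3 \<and> y3 \<le> R \<and> d \<le> y4 \<and> y4 \<le> R \<and> d \<le> y6 \<and> y6 \<le> R)"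
    for y1 y2 y3 y4 y6
  proof -
    note T = Gf_terms[OF w y, folded G_def]
    have o: "(y < d \<or> y > R) \<Longrightarrow> y > 0 \<Longrightarrow> ww \<ge> wmin \<Longrightarrow> ww * phi y > C" for y ww
      using wphi_big[of wmin ww C y] wmin C unfolding d_def R_def by auto
    from out have "y1 < d \<or> y1 > R \<or> y2 < d \<or> y2 > R \<or> y3 < d \<or> y3 > R \<or> y4 < d \<or> y4 > R \<or> y6 < d \<or> y6 > R"
      by linarith
    moreover have "w1*phi y1 > C" if "y1 < d \<or> y1 > R" using o that y(1) wmin(2) by blast
    moreover have "w2*phi y2 > C" if "y2 < d \<or> y2 > R" using o that y(2) wmin(3) by blast
    moreover have "w3*phi y3 > C" if "y3 < d \<or> y3 > R" using o that y(3) wmin(4) by blast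
    moreover have "w4*phi y4 > C" if "y4 < d \<or> y4 > R" using o that y(4) wmin(5) by blast
    moreover have "w6*phi y6 > C" if "y6 < d \<or> y6 > R" using o that y(5) wmin(6) by blast
    ultimately show ?thesis using T(1-5) by linarith
  qed
  define K where "K = {d..R} \<times> {d..R} \<times> {d..R} \<times> {d..R} \<times> {d..R}"
  define f where "f = (\<lambda>p::real\<times>real\<times>real\<times>real\<times>real. G (fst p) (fst (snd p)) (fst (snd (snd p))) (fst (snd (snd (snd p)))) (snd (snd (snd (snd p)))))"
  have cK: "compact K" unfolding K_def by (intro compact_Times compact_Icc)
  have one: "(1,1,1,1,1) \<in> K" unfolding K_def using d R by auto
  have Kpos: "\<forall>p\<in>K. fst p > 0 \<and> fst (snd p) > 0 \<and> fst (snd (snd p)) > 0 \<and> fst (snd (snd (snd p))) > 0 \<and> snd (snd (snd (snd p))) > 0"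
    unfolding K_def using d by auto
  have Kpos2: "\<forall>p\<in>K. 0 < fst p * snd (snd (snd (snd p))) + fst (snd (snd p)) * fst (snd (snd (snd p)))"
    using Kpos by (auto intro!: add_pos_pos mult_pos_pos)
  have cf: "continuous_on K f"
    unfolding f_def G_def Gf_def phi_def
    apply (intro continuous_intros)
    using Kpos Kpos2 by (auto simp: less_imp_neq[symmetric] dest: less_imp_neq[symmetric])
  obtain z where zK: "z \<in> K" and zmin: "\<forall>y\<in>K. f z \<le> f y"
    using continuous_attains_inf[OF cK _ cf] one by blast
  obtain z1 z2 z3 z4 z6 where z: "z = (z1, z2, z3, z4, z6)" by (metis prod.collapse)
  have zpos: "z1 > 0" "z2 > 0" "z3 > 0" "z4 > 0" "z6 > 0" using Kpos zK unfolding z by auto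
  have zC: "G z1 z2 z3 z4 z6 \<le> C" using zmin one unfolding f_def C_def z by fastforce
  show ?thesis
  proof (intro exI conjI allI impI)
    fix y1 y2 y3 y4 y6 :: real
    assume y: "y1 > 0" "y2 > 0" "y3 > 0" "y4 > 0" "y6 > 0"
    show "Gf w1 w2 w3 w4 w5 w6 z1 z2 z3 z4 z6 \<le> Gf w1 w2 w3 w4 w5 w6 y1 y2 y3 y4 y6"
    proof (cases "d \<le> y1 \<and> y1 \<le> R \<and> d \<le> y2 \<and> y2 \<le> R \<and> d \<le> y3 \<and> y3 \<le> R \<and> d \<le> y4 \<and> y4 \<le> R \<and> d \<le> y6 \<and> y6 \<le> R")
      case True
      then have "(y1,y2,y3,y4,y6) \<in> K" unfolding K_def by auto
      then show ?thesis using zmin unfolding f_def z G_def by fastforce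
    next
      case False
      then show ?thesis using big[OF y False] zC unfolding G_def by linarith
    qed
  qed (use zpos in auto)
qed



definition psi :: "real \<Rightarrow> real" where "psi x = x - 1/x^2"

lemma phi_deriv: "x \<noteq> 0 \<Longrightarrow> (phi has_real_derivative psi x) (at x)"
  unfolding phi_def[abs_def] psi_def
  apply (rule derivative_eq_intros refl | simp)+
  apply (simp add: field_simps power2_eq_square)
  done

lemma phi_chain[derivative_intros]:
  "(h has_real_derivative h') (at x) \<Longrightarrow> h x \<noteq> 0 \<Longrightarrow> ((\<lambda>t. phi (h t)) has_real_derivative (psi (h x) * h')) (at x)"
  using DERIV_chain2[OF phi_deriv] by blast

lemma crit_min:
  assumes w: "w1 > 0" "w2 > 0" "w3 > 0" "w4 > 0" "w5 > 0" "w6 > 0"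
    and z: "z1 > 0" "z2 > 0" "z3 > 0" "z4 > 0" "z6 > 0"
    and zmin: "\<forall>y1 y2 y3 y4 y6. y1 > 0 \<longrightarrow> y2 > 0 \<longrightarrow> y3 > 0 \<longrightarrow> y4 > 0 \<longrightarrow> y6 > 0 \<longrightarrow>
       Gf w1 w2 w3 w4 w5 w6 z1 z2 z3 z4 z6 \<le> Gf w1 w2 w3 w4 w5 w6 y1 y2 y3 y4 y6"
  defines "x5 \<equiv> (z1*z6+z3*z4)/z2"
  shows "w1 * psi z1 + w5 * psi x5 * (z6/z2) = 0"
    "w2 * psi z2 - w5 * psi x5 * (x5/z2) = 0"
    "w3 * psi z3 + w5 * psi x5 * (z4/z2) = 0"
    "w4 * psi z4 + w5 * psi x5 * (z3/z2) = 0"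
    "w6 * psi z6 + w5 * psi x5 * (z1/z2) = 0"
proof -
  have x5: "x5 > 0" unfolding x5_def using z by (intro divide_pos_pos add_pos_pos mult_pos_pos) auto
  have nz5: "(z1*z6+z3*z4)/z2 \<noteq> 0" "z1*z6+z3*z4 \<noteq> 0" using x5 z unfolding x5_def by auto
  have lm: "D = 0" if "(g has_real_derivative D) (at c)" "c > 0" "\<And>y. y > 0 \<Longrightarrow> g c \<le> g y" for g D c
  proof (rule DERIV_local_min[OF that(1) that(2)])
    show "\<forall>y. \<bar>c - y\<bar> < c \<longrightarrow> g c \<le> g y" using that(3) by auto
  qed
  have d1: "((\<lambda>t. Gf w1 w2 w3 w4 w5 w6 t z2 z3 z4 z6) has_real_derivative (w1 * psi z1 + w5 * psi x5 * (z6/z2))) (at z1)"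
    unfolding Gf_def
    apply (rule derivative_eq_intros refl | (use z nz5 in \<open>simp add: x5_def; fail\<close>))+
    done
  show "w1 * psi z1 + w5 * psi x5 * (z6/z2) = 0"
    by (rule lm[OF d1 z(1)]) (use zmin z in auto)
  have d2: "((\<lambda>t. Gf w1 w2 w3 w4 w5 w6 z1 t z3 z4 z6) has_real_derivative (w2 * psi z2 - w5 * psi x5 * (x5/z2))) (at z2)"
    unfolding Gf_def
    apply (rule derivative_eq_intros refl | (use z nz5 in \<open>simp add: x5_def; fail\<close>))+
    apply (use z in \<open>simp add: x5_def field_simps power2_eq_square\<close>)?
    done
  show "w2 * psi z2 - w5 * psi x5 * (x5/z2) = 0"
    by (rule lm[OF d2 z(2)]) (use zmin z in auto)
  have d3: "((\<lambda>t. Gf w1 w2 w3 w4 w5 w6 z1 z2 t z4 z6) has_real_derivative (w3 * psi z3 + w5 * psi x5 * (z4/z2))) (at z3)"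
    unfolding Gf_def
    apply (rule derivative_eq_intros refl | (use z nz5 in \<open>simp add: x5_def; fail\<close>))+
    apply (use z in \<open>simp add: x5_def field_simps power2_eq_square\<close>)?
    done
  show "w3 * psi z3 + w5 * psi x5 * (z4/z2) = 0"
    by (rule lm[OF d3 z(3)]) (use zmin z in auto)
  have d4: "((\<lambda>t. Gf w1 w2 w3 w4 w5 w6 z1 z2 z3 t z6) has_real_derivative (w4 * psi z4 + w5 * psi x5 * (z3/z2))) (at z4)"
    unfolding Gf_def
    apply (rule derivative_eq_intros refl | (use z nz5 in \<open>simp add: x5_def; fail\<close>))+
    apply (use z in \<open>simp add: x5_def field_simps power2_eq_square\<close>)?
    done
  show "w4 * psi z4 + w5 * psi x5 * (z3/z2) = 0"
    by (rule lm[OF d4 z(4)]) (use zmin z in auto)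
  have d6: "((\<lambda>t. Gf w1 w2 w3 w4 w5 w6 z1 z2 z3 z4 t) has_real_derivative (w6 * psi z6 + w5 * psi x5 * (z1/z2))) (at z6)"
    unfolding Gf_def
    apply (rule derivative_eq_intros refl | (use z nz5 in \<open>simp add: x5_def; fail\<close>))+
    apply (use z in \<open>simp add: x5_def field_simps power2_eq_square\<close>)?
    done
  show "w6 * psi z6 + w5 * psi x5 * (z1/z2) = 0"
    by (rule lm[OF d6 z(5)]) (use zmin z in auto)
qed



lemma Fid: "w/rr = -(a/M)*(w*rr^2) - b*c" if "rr > 0" "-w/rr^2 = a*(w*rr)/M + b*d" "c = d*rr" for w rr c d a b M :: real
proof -
  have "-w/rr = (-w/rr^2) * rr" using that(1) by (simp add: power2_eq_square)
  also have "\<dots> = a*(w*rr^2)/M + b*c" unfolding that(2) that(3) by (simp add: algebra_simps power2_eq_square)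
  finally show ?thesis by simp
qed

lemma cube_ge: 
  fixes w rr M a d :: real
  assumes "w > 0" "rr > 0" "M > 0" "-w/rr^2 = a*(w*rr)/M + d"
  shows "d \<ge> 0 \<Longrightarrow> (-a/M)*rr^3 \<ge> 1" "d \<le> 0 \<Longrightarrow> (-a/M)*rr^3 \<le> 1"
proof -
  have e: "d * (rr^2/w) = (-a/M)*rr^3 - 1"
  proof -
    have "d = -w/rr^2 - a*(w*rr)/M" using assms(4) by simp
    then show ?thesis using assms(1-3) by (simp add: field_simps power2_eq_square power3_eq_cube)
  qed
  have p: "rr^2/w > 0" using assms by simp
  show "d \<ge> 0 \<Longrightarrow> (-a/M)*rr^3 \<ge> 1"
  proof -
    assume "d \<ge> 0" then have "d * (rr^2/w) \<ge> 0" using p by (intro mult_nonneg_nonneg) auto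
    then show ?thesis unfolding e by simp
  qed
  show "d \<le> 0 \<Longrightarrow> (-a/M)*rr^3 \<le> 1"
  proof -
    assume "d \<le> 0" then have "d * (rr^2/w) \<le> 0" using p by (intro mult_nonpos_nonneg) auto
    then show ?thesis unfolding e by simp
  qed
qed

lemma signs:
  fixes w1 w2 w3 w4 w5 w6 M a b r1 r2 r3 r4 r5 r6 :: real
  assumes w: "w1 > 0" "w2 > 0" "w3 > 0" "w4 > 0" "w5 > 0" "w6 > 0" and M: "M > 0"
    and r: "r1 > 0" "r2 > 0" "r3 > 0" "r4 > 0" "r5 > 0" "r6 > 0"
    and E1: "-w1/r1^2 = a*(w1*r1)/M + b*r6"
    and E2: "-w2/r2^2 = a*(w2*r2)/M - b*r5"
    and E3: "-w3/r3^2 = a*(w3*r3)/M + b*r4"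
    and E4: "-w4/r4^2 = a*(w4*r4)/M + b*r3"
    and E5: "-w5/r5^2 = a*(w5*r5)/M - b*r2"
    and E6: "-w6/r6^2 = a*(w6*r6)/M + b*r1"
    and Is: "w1*r1^2 + w2*r2^2 + w3*r3^2 + w4*r4^2 + w5*r5^2 + w6*r6^2 = 2*M"
    and Pr: "r1*r6 + r3*r4 - r2*r5 = 0"
  shows "a < 0" "b < 0"
proof -
  have E2': "-w2/r2^2 = a*(w2*r2)/M + b*(-r5)" using E2 by simp
  have E5': "-w5/r5^2 = a*(w5*r5)/M + b*(-r2)" using E5 by simp
  have F1: "w1/r1 = -(a/M)*(w1*r1^2) - b*(r1*r6)" using Fid[OF r(1) E1] by (simp add: mult.commute)
  have F2: "w2/r2 = -(a/M)*(w2*r2^2) - b*(-(r2*r5))" using Fid[OF r(2) E2'] by (simp add: mult.commute)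
  have F3: "w3/r3 = -(a/M)*(w3*r3^2) - b*(r3*r4)" using Fid[OF r(3) E3] by (simp add: mult.commute)
  have F4: "w4/r4 = -(a/M)*(w4*r4^2) - b*(r3*r4)" using Fid[OF r(4) E4] by (simp add: mult.commute)
  have F5: "w5/r5 = -(a/M)*(w5*r5^2) - b*(-(r2*r5))" using Fid[OF r(5) E5'] by (simp add: mult.commute)
  have F6: "w6/r6 = -(a/M)*(w6*r6^2) - b*(r1*r6)" using Fid[OF r(6) E6] by (simp add: mult.commute)
  have "w1/r1 + w2/r2 + w3/r3 + w4/r4 + w5/r5 + w6/r6 = -(a/M)*(w1*r1^2 + w2*r2^2 + w3*r3^2 + w4*r4^2 + w5*r5^2 + w6*r6^2)
      - 2*b*(r1*r6 + r3*r4 - r2*r5)"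
    unfolding F1 F2 F3 F4 F5 F6 by (simp add: algebra_simps)
  also have "\<dots> = -2*a" unfolding Is Pr using M by simp
  finally have U: "w1/r1 + w2/r2 + w3/r3 + w4/r4 + w5/r5 + w6/r6 = -2*a" .
  have "w1/r1 + w2/r2 + w3/r3 + w4/r4 + w5/r5 + w6/r6 > 0" using w r by (simp add: add_pos_pos)
  then show a: "a < 0" using U by linarith
  show "b < 0"
  proof (rule ccontr)
    assume "\<not> b < 0" then have b: "b \<ge> 0" by simp
    define c where "c = -a/M"
    have c: "c > 0" unfolding c_def using a M by (simp add: divide_neg_pos)
    have g1: "c*r1^3 \<ge> 1" unfolding c_def by (rule cube_ge(1)[OF w(1) r(1) M E1]) (use b r in simp)
    have g6: "c*r6^3 \<ge> 1" unfolding c_def by (rule cube_ge(1)[OF w(6) r(6) M E6]) (use b r in simp)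
    have g2: "c*r2^3 \<le> 1" unfolding c_def by (rule cube_ge(2)[OF w(2) r(2) M E2']) (use b r in simp)
    have g5: "c*r5^3 \<le> 1" unfolding c_def by (rule cube_ge(2)[OF w(5) r(5) M E5']) (use b r in simp)
    have "1 \<le> (c*r1^3) * (c*r6^3)" using g1 g6 by (metis mult_mono' le_numeral_extra(4) mult_1 zero_le_one order_trans)
    moreover have "(c*r2^3) * (c*r5^3) \<le> 1" using g2 g5 c r by (rule_tac mult_le_one) auto
    ultimately have "c^2 * (r2*r5)^3 \<le> c^2 * (r1*r6)^3" by (simp add: power_mult_distrib power2_eq_square algebra_simps)
    then have "(r2*r5)^3 \<le> (r1*r6)^3" using c by simp
    then have "r2*r5 \<le> r1*r6" using power_mono_iff[of "r2*r5" "r1*r6" 3] r by simp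
    moreover have "r3*r4 > 0" using r by simp
    ultimately show False using Pr by linarith
  qed
qed



lemma Imom_sum:
  assumes "m1+m2+m3+m4 > 0" "Imom m1 m2 m3 m4 r = 1"
  shows "m1*m2*(r$1)^2 + m1*m3*(r$2)^2 + m1*m4*(r$3)^2 + m2*m3*(r$4)^2 + m2*m4*(r$5)^2 + m3*m4*(r$6)^2
     = 2*(m1+m2+m3+m4)"
  using assms unfolding Imom_def by (simp add: field_simps)

lemma Upot_less:
  assumes m: "m1 > 0" "m2 > 0" "m3 > 0" "m4 > 0"
    and cr: "crit_point m1 m2 m3 m4 r" and cs: "crit_point m1 m2 m3 m4 s" and ne: "s \<noteq> r"
  shows "Upot m1 m2 m3 m4 s > Upot m1 m2 m3 m4 r"
proof -
  have M: "m1+m2+m3+m4 > 0" using m by simp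
  have w: "m1*m2 > 0" "m1*m3 > 0" "m1*m4 > 0" "m2*m3 > 0" "m2*m4 > 0" "m3*m4 > 0" using m by simp_all
  from cr[unfolded crit_iff[OF M]] obtain a b where
    rM: "r \<in> Mplus m1 m2 m3 m4" and rpos: "\<forall>i. 0 < r$i" and e: "eqs m1 m2 m3 m4 a b r" by blast
  from cs[unfolded crit_iff[OF M]] have
    sM: "s \<in> Mplus m1 m2 m3 m4" and spos: "\<forall>i. 0 < s$i" by blast+
  have rp: "r$1 > 0" "r$2 > 0" "r$3 > 0" "r$4 > 0" "r$5 > 0" "r$6 > 0" using rpos by auto
  have sp: "s$1 > 0" "s$2 > 0" "s$3 > 0" "s$4 > 0" "s$5 > 0" "s$6 > 0" using spos by auto
  have Ir: "Imom m1 m2 m3 m4 r = 1" "Pcay r = 0" using rM unfolding Mplus_def by auto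
  have Is: "Imom m1 m2 m3 m4 s = 1" "Pcay s = 0" using sM unfolding Mplus_def by auto
  note E = e[unfolded eqs_def]
  have ab: "a < 0" "b < 0"
    using signs[OF w M rp E[THEN conjunct1] E[THEN conjunct2, THEN conjunct1]
      E[THEN conjunct2, THEN conjunct2, THEN conjunct1]
      E[THEN conjunct2, THEN conjunct2, THEN conjunct2, THEN conjunct1]
      E[THEN conjunct2, THEN conjunct2, THEN conjunct2, THEN conjunct2, THEN conjunct1]
      E[THEN conjunct2, THEN conjunct2, THEN conjunct2, THEN conjunct2, THEN conjunct2]
      Imom_sum[OF M Ir(1)]] Ir(2) unfolding Pcay_def by auto
  define t where "t i = ln (s$i / r$i)" for i
  have st: "s$i = r$i * exp (t i)" for i
  proof -
    have "s$i / r$i > 0" using rpos spos by simp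
    then have "exp (t i) = s$i / r$i" unfolding t_def by simp
    then show ?thesis using rpos by (metis less_irrefl nonzero_mult_div_cancel_left times_divide_eq_right)
  qed
  have nz: "t 1 \<noteq> 0 \<or> t 2 \<noteq> 0 \<or> t 3 \<noteq> 0 \<or> t 4 \<noteq> 0 \<or> t 5 \<noteq> 0 \<or> t 6 \<noteq> 0"
  proof (rule ccontr)
    assume "\<not> ?thesis"
    then have "\<forall>i. t i = 0" by (simp add: forall_6)
    then have "\<forall>i. s$i = r$i" using st by simp
    then show False using ne by (simp add: vec_eq_iff)
  qed
  have Ist: "m1*m2*(r$1*exp (t 1))^2 + m1*m3*(r$2*exp (t 2))^2 + m1*m4*(r$3*exp (t 3))^2 + m2*m3*(r$4*exp (t 4))^2
      + m2*m4*(r$5*exp (t 5))^2 + m3*m4*(r$6*exp (t 6))^2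
    = m1*m2*(r$1)^2 + m1*m3*(r$2)^2 + m1*m4*(r$3)^2 + m2*m3*(r$4)^2 + m2*m4*(r$5)^2 + m3*m4*(r$6)^2"
    using Imom_sum[OF M Ir(1)] Imom_sum[OF M Is(1)] unfolding st by simp
  have Pst: "(r$1*exp (t 1))*(r$6*exp (t 6)) + (r$3*exp (t 3))*(r$4*exp (t 4)) - (r$2*exp (t 2))*(r$5*exp (t 5)) = 0"
    using Is(2) unfolding Pcay_def st by simp
  have Pr: "r$1*r$6 + r$3*r$4 - r$2*r$5 = 0" using Ir(2) unfolding Pcay_def by simp
  have "m1*m2/(r$1*exp (t 1)) + m1*m3/(r$2*exp (t 2)) + m1*m4/(r$3*exp (t 3)) + m2*m3/(r$4*exp (t 4))
      + m2*m4/(r$5*exp (t 5)) + m3*m4/(r$6*exp (t 6))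
     > m1*m2/r$1 + m1*m3/r$2 + m1*m4/r$3 + m2*m3/r$4 + m2*m4/r$5 + m3*m4/r$6"
    by (rule core[OF w M rp ab E[THEN conjunct1] E[THEN conjunct2, THEN conjunct1]
      E[THEN conjunct2, THEN conjunct2, THEN conjunct1]
      E[THEN conjunct2, THEN conjunct2, THEN conjunct2, THEN conjunct1]
      E[THEN conjunct2, THEN conjunct2, THEN conjunct2, THEN conjunct2, THEN conjunct1]
      E[THEN conjunct2, THEN conjunct2, THEN conjunct2, THEN conjunct2, THEN conjunct2]
      Ist Pr Pst nz])
  then show ?thesis unfolding Upot_def st by simp
qed



lemma scale_eq:
  fixes w z k M b0 c :: real
  assumes "w > 0" "z > 0" "k > 0" "M > 0" "w * psi z = b0 * c"
  shows "-w/(k*z)^2 = (-M/k^3)*(w*(k*z))/M + (b0/k^3)*(k*c)"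
proof -
  have "-w/z^2 = b0*c - w*z" using assms(5) unfolding psi_def by (simp add: algebra_simps)
  moreover have "-w/(k*z)^2 = (-w/z^2)/k^2" by (simp add: power_mult_distrib)
  ultimately have "-w/(k*z)^2 = (b0*c - w*z)/k^2" by simp
  also have "\<dots> = (-M/k^3)*(w*(k*z))/M + (b0/k^3)*(k*c)"
    using assms(3,4) by (simp add: field_simps power2_eq_square power3_eq_cube)
  finally show ?thesis .
qed

lemma existence:
  assumes m: "m1 > 0" "m2 > 0" "m3 > 0" "m4 > 0"
  shows "\<exists>r. crit_point m1 m2 m3 m4 r"
proof -
  have M: "m1+m2+m3+m4 > 0" using m by simp
  have w: "m1*m2 > 0" "m1*m3 > 0" "m1*m4 > 0" "m2*m3 > 0" "m2*m4 > 0" "m3*m4 > 0" using m by simp_all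
  obtain z1 z2 z3 z4 z6 where z: "z1 > 0" "z2 > 0" "z3 > 0" "z4 > 0" "z6 > 0" and
    zmin: "\<forall>y1 y2 y3 y4 y6. y1 > 0 \<longrightarrow> y2 > 0 \<longrightarrow> y3 > 0 \<longrightarrow> y4 > 0 \<longrightarrow> y6 > 0 \<longrightarrow>
       Gf (m1*m2) (m1*m3) (m1*m4) (m2*m3) (m2*m4) (m3*m4) z1 z2 z3 z4 z6 \<le> Gf (m1*m2) (m1*m3) (m1*m4) (m2*m3) (m2*m4) (m3*m4) y1 y2 y3 y4 y6"
    using ex_min[OF w] by (elim exE conjE) (rule that; assumption)
  define x5 where "x5 = (z1*z6+z3*z4)/z2"
  have x5: "x5 > 0" unfolding x5_def using z by (intro divide_pos_pos add_pos_pos mult_pos_pos) auto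
  note C = crit_min[OF w z zmin, folded x5_def]
  define b0 where "b0 = -(m2*m4)*psi x5/z2"
  have P1: "(m1*m2)*psi z1 = b0*z6" using C(1) z unfolding b0_def by (simp add: field_simps)
  have P2: "(m1*m3)*psi z2 = b0*(-x5)" using C(2) z unfolding b0_def by (simp add: field_simps)
  have P3: "(m1*m4)*psi z3 = b0*z4" using C(3) z unfolding b0_def by (simp add: field_simps)
  have P4: "(m2*m3)*psi z4 = b0*z3" using C(4) z unfolding b0_def by (simp add: field_simps)
  have P5: "(m2*m4)*psi x5 = b0*(-z2)" using z unfolding b0_def by (simp add: field_simps)
  have P6: "(m3*m4)*psi z6 = b0*z1" using C(5) z unfolding b0_def by (simp add: field_simps)
  define r0 :: "real^6" where "r0 = (\<chi> i. if i = 1 then z1 else if i = 2 then z2 else if i = 3 then z3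
     else if i = 4 then z4 else if i = 5 then x5 else z6)"
  have r0: "r0$1 = z1" "r0$2 = z2" "r0$3 = z3" "r0$4 = z4" "r0$5 = x5" "r0$6 = z6"
    unfolding r0_def by simp_all
  define I0 where "I0 = Imom m1 m2 m3 m4 r0"
  have I0: "I0 > 0" unfolding I0_def Imom_def r0 using M w z x5 m
    by (intro mult_pos_pos add_pos_pos) auto
  define k where "k = 1 / sqrt I0"
  have k: "k > 0" unfolding k_def using I0 by simp
  have k2: "k^2 * I0 = 1" unfolding k_def using I0 by (simp add: power_divide)
  define r :: "real^6" where "r = (\<chi> i. k * r0$i)"
  have rc: "r$1 = k*z1" "r$2 = k*z2" "r$3 = k*z3" "r$4 = k*z4" "r$5 = k*x5" "r$6 = k*z6"
    unfolding r_def using r0 by simp_all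
  have rpos: "\<forall>i. 0 < r$i" unfolding forall_6 rc using k z x5 by simp
  have Ir: "Imom m1 m2 m3 m4 r = k^2 * I0"
    unfolding I0_def Imom_def rc r0 using M by (simp add: power_mult_distrib field_simps)
  have Pr: "Pcay r = 0"
    unfolding Pcay_def rc using z unfolding x5_def by (simp add: field_simps)
  have rM: "r \<in> Mplus m1 m2 m3 m4" unfolding Mplus_def using rpos Ir k2 Pr by (auto intro: less_imp_le)
  have e: "eqs m1 m2 m3 m4 (-(m1+m2+m3+m4)/k^3) (b0/k^3) r"
    unfolding eqs_def rc
    using scale_eq[OF w(1) z(1) k M P1] scale_eq[OF w(2) z(2) k M P2] scale_eq[OF w(3) z(3) k M P3]
      scale_eq[OF w(4) z(4) k M P4] scale_eq[OF w(5) x5 k M P5] scale_eq[OF w(6) z(5) k M P6]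
    by (simp add: algebra_simps)
  show ?thesis using crit_iff[OF M] rM rpos e by blast
qed

theorem lemma6:
  fixes m1 m2 m3 m4 :: real
  assumes "m1 > 0" "m2 > 0" "m3 > 0" "m4 > 0"
  shows "\<exists>!r. crit_point m1 m2 m3 m4 r"
proof -
  obtain r where r: "crit_point m1 m2 m3 m4 r" using existence[OF assms] by blast
  show ?thesis
  proof (rule ex1I[of _ r])
    show "crit_point m1 m2 m3 m4 r" by (rule r)
    fix s assume s: "crit_point m1 m2 m3 m4 s"
    show "s = r"
    proof (rule ccontr)
      assume ne: "s \<noteq> r"
      have "Upot m1 m2 m3 m4 s > Upot m1 m2 m3 m4 r" by (rule Upot_less[OF assms r s ne])
      moreover have "Upot m1 m2 m3 m4 r > Upot m1 m2 m3 m4 s" using ne by (intro Upot_less[OF assms s r]) auto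
      ultimately show False by simp
    qed
  qed
qed


end
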